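(* There exists a two-qubit computation $U\in U(4)$ such that every circuit of elementary gates implementing $U$ up to global phase contains at least $17$ gates; in particular, it contains at least $15$ one-qubit rotation gates and at least $2$ CNOT gates.
   Context: Two-qubit computations are $4\times4$ unitary matrices with respect to the computational basis $|00\rangle,|01\rangle,|10\rangle,|11\rangle$. The elementary gates are the $4\times 4$ matrices of the following forms: the one-qubit rotations $R_y(\theta)\otimes \mathbf{1}$, $\mathbf{1}\otimes R_y(\theta)$, $R_z(\alpha)\otimes\mathbf{1}$, $\mathbf{1}\otimes R_z(\alpha)$, where $R_y(\theta)=\begin{pmatrix}\cos\theta/2 & \sin\theta/2\\ -\sin\theta/2 & \cos\theta/2\end{pmatrix}$ and $R_z(\alpha)=\mathrm{diag}(e^{-i\alpha/2},e^{i\alpha/2})$ with $\theta,\alpha$ real; and the two CNOT gates, namely the permutation matrix swapping $|10\rangle\leftrightarrow|11\rangle$ and the permutation matrix swapping $|01\rangle\leftrightarrow|11\rangle$. A circuit computes the product of its gate matrices; it implements $U$ up to global phase if this product equals $cU$ for some $c\in\mathbb{C}$ with $|c|=1$. *)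

theory Defs
  imports Complex_Main "Jordan_Normal_Form.Matrix"
begin

(* Two-qubit computations: 4x4 complex matrices w.r.t. basis |00>,|01>,|10>,|11>
   = indices 0,1,2,3 (index 2*q1 + q2). *)

definition Ry :: "real \<Rightarrow> complex mat" where
  "Ry \<theta> = mat_of_rows_list 2
     [[complex_of_real (cos (\<theta>/2)), complex_of_real (sin (\<theta>/2))],
      [complex_of_real (- sin (\<theta>/2)), complex_of_real (cos (\<theta>/2))]]"

definition Rz :: "real \<Rightarrow> complex mat" where
  "Rz \<alpha> = mat_of_rows_list 2
     [[exp (- \<i> * complex_of_real (\<alpha>/2)), 0],
      [0, exp (\<i> * complex_of_real (\<alpha>/2))]]"

definition kron2 :: "complex mat \<Rightarrow> complex mat \<Rightarrow> complex mat" where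
  "kron2 A B = mat 4 4 (\<lambda>(i,j). A $$ (i div 2, j div 2) * B $$ (i mod 2, j mod 2))"

definition perm4 :: "(nat \<Rightarrow> nat) \<Rightarrow> complex mat" where
  "perm4 p = mat 4 4 (\<lambda>(i,j). if i = p j then 1 else 0)"

datatype gate =
    RY1 real
  | RY2 real
  | RZ1 real
  | RZ2 real
  | CNOT1      (* swaps |10> and |11> *)
  | CNOT2      (* swaps |01> and |11> *)

fun gate_mat :: "gate \<Rightarrow> complex mat" where
  "gate_mat (RY1 t) = kron2 (Ry t) (1\<^sub>m 2)"
| "gate_mat (RY2 t) = kron2 (1\<^sub>m 2) (Ry t)"
| "gate_mat (RZ1 a) = kron2 (Rz a) (1\<^sub>m 2)"
| "gate_mat (RZ2 a) = kron2 (1\<^sub>m 2) (Rz a)"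
| "gate_mat CNOT1 = perm4 (Transposition.transpose 2 3)"
| "gate_mat CNOT2 = perm4 (Transposition.transpose 1 3)"

fun is_cnot :: "gate \<Rightarrow> bool" where
  "is_cnot CNOT1 = True"
| "is_cnot CNOT2 = True"
| "is_cnot _ = False"

definition circuit_mat :: "gate list \<Rightarrow> complex mat" where
  "circuit_mat c = foldr (\<lambda>g M. gate_mat g * M) c (1\<^sub>m 4)"

definition implements_up_to_phase :: "gate list \<Rightarrow> complex mat \<Rightarrow> bool" where
  "implements_up_to_phase c U \<longleftrightarrow> (\<exists>z::complex. cmod z = 1 \<and> circuit_mat c = z \<cdot>\<^sub>m U)"

definition adjoint4 :: "complex mat \<Rightarrow> complex mat" where
  "adjoint4 U = mat (dim_col U) (dim_row U) (\<lambda>(i,j). cnj (U $$ (j,i)))"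

definition unitary4 :: "complex mat \<Rightarrow> bool" where
  "unitary4 U \<longleftrightarrow> U \<in> carrier_mat 4 4 \<and> U * adjoint4 U = 1\<^sub>m 4"

end

theory Submission
  imports Defs "HOL-Analysis.Analysis" "Jordan_Normal_Form.Determinant"
begin


lemma sum4: "(\<Sum>k<4. f k) = f (0::nat) + f 1 + f 2 + (f 3 :: 'a::comm_monoid_add)"
  by (simp add: eval_nat_numeral)
lemma all4: "(\<forall>i<4. P i) \<longleftrightarrow> P 0 \<and> P 1 \<and> P 2 \<and> P (3::nat)"
  by (auto simp: eval_nat_numeral less_Suc_eq)
lemma mult4: "dim_col A = 4 \<Longrightarrow> dim_row B = 4 \<Longrightarrow> i < dim_row A \<Longrightarrow> j < dim_col B \<Longrightarrow>
  (A * B) $$ (i,j) = (\<Sum>k<4. A $$ (i,k) * B $$ (k,j))"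
  by (simp add: scalar_prod_def atLeast0LessThan)
lemma kron2_dims[simp]: "dim_row (kron2 A B) = 4" "dim_col (kron2 A B) = 4"
  by (auto simp: kron2_def)
lemma perm4_dims[simp]: "dim_row (perm4 p) = 4" "dim_col (perm4 p) = 4"
  by (auto simp: perm4_def)
lemma gate_carrier[simp]: "gate_mat g \<in> carrier_mat 4 4"
  by (cases g) (auto simp: kron2_def perm4_def)
lemma gate_dims[simp]: "dim_row (gate_mat g) = 4" "dim_col (gate_mat g) = 4"
  using gate_carrier[of g] unfolding carrier_mat_def by blast+

definition MM :: "complex mat" where
 "MM = Matrix.mat 4 4 (\<lambda>(i,j). if i = 0 \<and> j = 3 then -1 else if i=1 \<and> j=2 then 1
     else if i=2 \<and> j=1 then 1 else if i=3 \<and> j=0 then -1 else 0)"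
lemma MM_dims[simp]: "dim_row MM = 4" "dim_col MM = 4" by (auto simp add: MM_def)
lemma MM_carrier[simp]: "MM \<in> carrier_mat 4 4" by (simp add: MM_def)

lemma eq4I: "dim_row A = 4 \<Longrightarrow> dim_col A = 4 \<Longrightarrow> dim_row B = 4 \<Longrightarrow> dim_col B = 4 \<Longrightarrow>
   (\<forall>i<4. \<forall>j<4. A $$ (i,j) = B $$ (i,j)) \<Longrightarrow> A = B"
  by (rule eq_matI) auto

lemma c4_mult[simp]: "A \<in> carrier_mat 4 4 \<Longrightarrow> B \<in> carrier_mat 4 4 \<Longrightarrow> A * B \<in> carrier_mat 4 4"
  by auto
lemma c4_tr[simp]: "A \<in> carrier_mat 4 4 \<Longrightarrow> transpose_mat A \<in> carrier_mat 4 4"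
  by auto
lemma c4_one[simp]: "1\<^sub>m 4 \<in> carrier_mat 4 4" by auto
lemma c4_smult[simp]: "A \<in> carrier_mat 4 4 \<Longrightarrow> a \<cdot>\<^sub>m A \<in> carrier_mat 4 4" by auto
lemma c4_add[simp]: "A \<in> carrier_mat 4 4 \<Longrightarrow> B \<in> carrier_mat 4 4 \<Longrightarrow> A + B \<in> carrier_mat 4 4"
  by auto
lemma c4_minus[simp]: "A \<in> carrier_mat 4 4 \<Longrightarrow> B \<in> carrier_mat 4 4 \<Longrightarrow> A - B \<in> carrier_mat 4 4"
  by auto

lemmas assoc4 = assoc_mult_mat[of _ 4 4 _ 4 _ 4]

lemmas gsimps = kron2_def Ry_def Rz_def mat_of_rows_list_def perm4_def MM_def Transposition.transpose_def

lemma sin_sq_c: "complex_of_real (sin x) * complex_of_real (sin x) = 1 - complex_of_real (cos x) * complex_of_real (cos x)"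
proof -
  have "sin x * sin x = 1 - cos x * cos x" by (metis sin_squared_eq power2_eq_square)
  then show ?thesis by (metis of_real_1 of_real_diff of_real_mult)
qed

fun is_loc :: "gate \<Rightarrow> bool" where
  "is_loc CNOT1 = False" | "is_loc CNOT2 = False" | "is_loc _ = True"

lemma is_loc_iff: "is_loc g \<longleftrightarrow> \<not> is_cnot g" by (cases g) auto

fun inv_gate :: "gate \<Rightarrow> gate" where
  "inv_gate (RY1 t) = RY1 (-t)" | "inv_gate (RY2 t) = RY2 (-t)"
| "inv_gate (RZ1 t) = RZ1 (-t)" | "inv_gate (RZ2 t) = RZ2 (-t)"
| "inv_gate g = g"

lemma loc_L1: "is_loc g \<Longrightarrow> gate_mat g * MM * transpose_mat (gate_mat g) = MM"
  apply (cases g)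
  apply (simp_all)
  apply (rule eq4I, simp_all add: mult4 sum4 all4 del: index_mult_mat(1), simp add: gsimps sin_sq_c flip: exp_add)+
  done

lemma loc_L2: "is_loc g \<Longrightarrow> transpose_mat (gate_mat g) * MM = MM * gate_mat (inv_gate g)"
  apply (cases g)
  apply (simp_all)
  apply (rule eq4I, simp_all add: mult4 sum4 all4 del: index_mult_mat(1), simp add: gsimps sin_sq_c flip: exp_add)+
  done

lemma loc_L3: "is_loc g \<Longrightarrow> gate_mat (inv_gate g) * gate_mat g = 1\<^sub>m 4"
  apply (cases g)
  apply (simp_all)
  apply (rule eq4I, simp_all add: mult4 sum4 all4 del: index_mult_mat(1), simp add: gsimps sin_sq_c flip: exp_add)+
  done


section \<open>The invariant\<close>

definition gam :: "complex mat \<Rightarrow> complex mat" where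
  "gam C = C * MM * transpose_mat C * MM"
definition tr4 :: "complex mat \<Rightarrow> complex" where
  "tr4 A = (\<Sum>i<4. A $$ (i,i))"

lemma gam_carrier[simp]: "C \<in> carrier_mat 4 4 \<Longrightarrow> gam C \<in> carrier_mat 4 4"
  by (simp add: gam_def)

lemma tr4_comm: "A \<in> carrier_mat 4 4 \<Longrightarrow> B \<in> carrier_mat 4 4 \<Longrightarrow> tr4 (A * B) = tr4 (B * A)"
proof -
  assume A: "A \<in> carrier_mat 4 4" and B: "B \<in> carrier_mat 4 4"
  have "tr4 (A * B) = (\<Sum>i<4. \<Sum>k<4. A $$ (i,k) * B $$ (k,i))"
    unfolding tr4_def using A B by (intro sum.cong refl) (subst mult4, auto)
  also have "\<dots> = (\<Sum>k<4. \<Sum>i<4. B $$ (k,i) * A $$ (i,k))"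
    by (subst sum.swap) (simp add: mult.commute)
  also have "\<dots> = tr4 (B * A)"
    unfolding tr4_def using A B by (intro sum.cong refl) (subst mult4, auto)
  finally show ?thesis .
qed

lemma one4_left[simp]: "(A :: complex mat) \<in> carrier_mat 4 4 \<Longrightarrow> 1\<^sub>m 4 * A = A" by (erule left_mult_one_mat)
lemma one4_right[simp]: "(A :: complex mat) \<in> carrier_mat 4 4 \<Longrightarrow> A * 1\<^sub>m 4 = A" by (erule right_mult_one_mat)

lemma tr4_sim:
  assumes P: "P \<in> carrier_mat 4 4" and Q: "Q \<in> carrier_mat 4 4" and X: "X \<in> carrier_mat 4 4"
    and QP: "Q * P = 1\<^sub>m 4"
  shows "tr4 (P * X * Q) = tr4 X" "tr4 ((P * X * Q) * (P * X * Q)) = tr4 (X * X)"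
proof -
  have gen: "tr4 (P * Y * Q) = tr4 Y" if Y: "Y \<in> carrier_mat 4 4" for Y
  proof -
    have "tr4 (P * Y * Q) = tr4 (Q * (P * Y))" using P Q Y by (intro tr4_comm) auto
    also have "Q * (P * Y) = (Q * P) * Y" using P Q Y by (simp add: assoc4)
    finally show ?thesis using QP Y by simp
  qed
  show "tr4 (P * X * Q) = tr4 X" using gen X .
  have "(P * X * Q) * (P * X * Q) = P * (X * ((Q * P) * (X * Q)))"
    using P Q X by (simp add: assoc4)
  also have "\<dots> = P * (X * X) * Q" using P Q X QP by (simp add: assoc4)
  finally show "tr4 ((P * X * Q) * (P * X * Q)) = tr4 (X * X)"
    using gen[of "X * X"] X by simp
qed

lemma circuit_carrier[simp]: "circuit_mat c \<in> carrier_mat 4 4"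
  by (induction c) (auto simp: circuit_mat_def)

lemma circuit_Cons: "circuit_mat (g # c) = gate_mat g * circuit_mat c"
  by (simp add: circuit_mat_def)
lemma circuit_Nil: "circuit_mat [] = 1\<^sub>m 4"
  by (simp add: circuit_mat_def)

lemma circuit_append: "circuit_mat (a @ b) = circuit_mat a * circuit_mat b"
  by (induction a) (auto simp: circuit_Cons circuit_Nil assoc4)

lemma gam_left: "is_loc g \<Longrightarrow> C \<in> carrier_mat 4 4 \<Longrightarrow>
   gam (gate_mat g * C) = gate_mat g * gam C * gate_mat (inv_gate g)"
  unfolding gam_def
  by (simp add: transpose_mult[of _ 4 4 _ 4] assoc4 loc_L2)

lemma loc_L1': "is_loc g \<Longrightarrow> X \<in> carrier_mat 4 4 \<Longrightarrow>
   gate_mat g * (MM * (transpose_mat (gate_mat g) * X)) = MM * X"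
proof -
  assume lg: "is_loc g" and X: "X \<in> carrier_mat 4 4"
  have "gate_mat g * (MM * (transpose_mat (gate_mat g) * X)) = gate_mat g * MM * transpose_mat (gate_mat g) * X"
    using X by (simp add: assoc4)
  also have "\<dots> = MM * X" using loc_L1[OF lg] by simp
  finally show ?thesis .
qed

lemma gam_right: "is_loc g \<Longrightarrow> C \<in> carrier_mat 4 4 \<Longrightarrow>
   gam (C * gate_mat g) = gam C"
  unfolding gam_def
  by (simp add: transpose_mult[of _ 4 4 _ 4] assoc4 loc_L1')

lemma gam_left_list: "\<forall>g\<in>set l. is_loc g \<Longrightarrow> C \<in> carrier_mat 4 4 \<Longrightarrow>
  \<exists>P Q. P \<in> carrier_mat 4 4 \<and> Q \<in> carrier_mat 4 4 \<and> Q * P = 1\<^sub>m 4 \<and>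
     gam (circuit_mat l * C) = P * gam C * Q"
proof (induction l)
  case Nil
  then show ?case by (intro exI[of _ "1\<^sub>m 4"]) (simp add: circuit_Nil)
next
  case (Cons g l)
  then obtain P Q where PQ: "P \<in> carrier_mat 4 4" "Q \<in> carrier_mat 4 4" "Q * P = 1\<^sub>m 4"
     "gam (circuit_mat l * C) = P * gam C * Q" by auto
  let ?G = "gate_mat g" and ?G' = "gate_mat (inv_gate g)"
  have lg: "is_loc g" using Cons by auto
  have "gam (circuit_mat (g # l) * C) = gam (?G * (circuit_mat l * C))"
    using Cons by (simp add: circuit_Cons assoc4)
  also have "\<dots> = ?G * gam (circuit_mat l * C) * ?G'"
    using lg Cons by (simp add: gam_left)
  also have "\<dots> = (?G * P) * gam C * (Q * ?G')"
    using PQ Cons by (simp add: assoc4)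
  finally have e: "gam (circuit_mat (g # l) * C) = (?G * P) * gam C * (Q * ?G')" .
  have "(Q * ?G') * (?G * P) = Q * ((?G' * ?G) * P)" using PQ by (simp add: assoc4)
  also have "\<dots> = 1\<^sub>m 4" using PQ loc_L3[OF lg] by simp
  finally show ?case using e PQ by (intro exI[of _ "?G * P"] exI[of _ "Q * ?G'"]) simp
qed

lemma gam_right_list: "\<forall>g\<in>set l. is_loc g \<Longrightarrow> C \<in> carrier_mat 4 4 \<Longrightarrow>
  gam (C * circuit_mat l) = gam C"
proof (induction l arbitrary: C)
  case Nil
  then show ?case by (simp add: circuit_Nil)
next
  case (Cons g l)
  have "C * circuit_mat (g # l) = (C * gate_mat g) * circuit_mat l"
    using Cons by (simp add: circuit_Cons assoc4)
  then show ?case using Cons by (simp add: gam_right)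
qed

lemma MM_sq: "MM * MM = 1\<^sub>m 4"
  by (rule eq4I, simp_all add: mult4 sum4 all4 del: index_mult_mat(1), simp add: gsimps)

lemma tr_cnot1: "tr4 (gam (gate_mat CNOT1)) = 0"
  by (simp add: tr4_def gam_def sum4 mult4 del: index_mult_mat(1), simp add: gsimps)
lemma tr_cnot2: "tr4 (gam (gate_mat CNOT2)) = 0"
  by (simp add: tr4_def gam_def sum4 mult4 del: index_mult_mat(1), simp add: gsimps)
lemma tr_one: "tr4 (1\<^sub>m 4) = 4"
  by (simp add: tr4_def sum4)

lemma split_le1: "length (filter is_cnot c) \<le> 1 \<Longrightarrow> (\<forall>g\<in>set c. is_loc g) \<or>
   (\<exists>l1 x l2. c = l1 @ x # l2 \<and> is_cnot x \<and> (\<forall>g\<in>set l1. is_loc g) \<and> (\<forall>g\<in>set l2. is_loc g))"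
proof (induction c)
  case Nil
  then show ?case by simp
next
  case (Cons g c)
  show ?case
  proof (cases "is_cnot g")
    case True
    then have "length (filter is_cnot c) = 0" using Cons.prems by simp
    then have "\<forall>g\<in>set c. is_loc g" by (simp add: is_loc_iff filter_empty_conv)
    then show ?thesis using True by (intro disjI2 exI[of _ "[]"] exI[of _ g] exI[of _ c]) simp
  next
    case False
    then have "length (filter is_cnot c) \<le> 1" using Cons.prems by simp
    from Cons.IH[OF this] show ?thesis
    proof
      assume "\<forall>g\<in>set c. is_loc g" then show ?thesis using False by (simp add: is_loc_iff)
    next
      assume "\<exists>l1 x l2. c = l1 @ x # l2 \<and> is_cnot x \<and> (\<forall>g\<in>set l1. is_loc g) \<and> (\<forall>g\<in>set l2. is_loc g)"
      then obtain l1 x l2 where "c = l1 @ x # l2 \<and> is_cnot x \<and> (\<forall>g\<in>set l1. is_loc g) \<and> (\<forall>g\<in>set l2. is_loc g)"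
        by blast
      then show ?thesis using False
        by (intro disjI2 exI[of _ "g # l1"] exI[of _ x] exI[of _ l2]) (simp add: is_loc_iff)
    qed
  qed
qed

definition t1 :: "complex mat \<Rightarrow> complex" where "t1 U = tr4 (gam U)"
definition t2 :: "complex mat \<Rightarrow> complex" where "t2 U = tr4 (gam U * gam U)"

lemma few_cnot_inv: "length (filter is_cnot c) \<le> 1 \<Longrightarrow>
   (t1 (circuit_mat c) = 4 \<and> t2 (circuit_mat c) = 4) \<or> t1 (circuit_mat c) = 0"
proof -
  assume "length (filter is_cnot c) \<le> 1"
  from split_le1[OF this] show ?thesis
  proof
    assume l: "\<forall>g\<in>set c. is_loc g"
    obtain P Q where PQ: "P \<in> carrier_mat 4 4" "Q \<in> carrier_mat 4 4" "Q * P = 1\<^sub>m 4"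
      "gam (circuit_mat c * 1\<^sub>m 4) = P * gam (1\<^sub>m 4) * Q"
      using gam_left_list[OF l, of "1\<^sub>m 4"] by auto
    have g1: "gam (1\<^sub>m 4) = 1\<^sub>m 4" by (simp add: gam_def MM_sq)
    have "t1 (circuit_mat c) = 4" using PQ tr4_sim(1)[OF PQ(1,2) c4_one PQ(3)] g1
      by (simp add: t1_def tr_one)
    moreover have "t2 (circuit_mat c) = 4" using PQ tr4_sim(2)[OF PQ(1,2) c4_one PQ(3)] g1
      by (simp add: t2_def tr_one)
    ultimately show ?thesis by simp
  next
    assume "\<exists>l1 x l2. c = l1 @ x # l2 \<and> is_cnot x \<and> (\<forall>g\<in>set l1. is_loc g) \<and> (\<forall>g\<in>set l2. is_loc g)"
    then obtain l1 x l2 where c: "c = l1 @ x # l2" "is_cnot x" "\<forall>g\<in>set l1. is_loc g" "\<forall>g\<in>set l2. is_loc g"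
      by blast
    have cm: "circuit_mat c = circuit_mat l1 * (gate_mat x * circuit_mat l2)"
      using c by (simp add: circuit_append circuit_Cons)
    obtain P Q where PQ: "P \<in> carrier_mat 4 4" "Q \<in> carrier_mat 4 4" "Q * P = 1\<^sub>m 4"
      "gam (circuit_mat l1 * (gate_mat x * circuit_mat l2)) = P * gam (gate_mat x * circuit_mat l2) * Q"
      using gam_left_list[OF c(3), of "gate_mat x * circuit_mat l2"] by auto
    have gx: "gam (gate_mat x * circuit_mat l2) = gam (gate_mat x)"
      using gam_right_list[OF c(4)] by simp
    have tx: "tr4 (gam (gate_mat x)) = 0" using c(2) tr_cnot1 tr_cnot2 by (cases x) auto
    have "t1 (circuit_mat c) = 0" unfolding t1_def cm PQ(4) gx
      using tr4_sim(1)[OF PQ(1,2) _ PQ(3), of "gam (gate_mat x)"] tx by simp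
    then show ?thesis by simp
  qed
qed

lemma tr4_smult: "tr4 (a \<cdot>\<^sub>m A) = a * tr4 A" if "A \<in> carrier_mat 4 4"
  using that by (simp add: tr4_def sum_distrib_left)

lemma smult_smult4: "a \<cdot>\<^sub>m (b \<cdot>\<^sub>m A) = (a * b) \<cdot>\<^sub>m (A :: complex mat)"
  by (rule eq_matI) auto
lemma transpose_smult4: "transpose_mat (a \<cdot>\<^sub>m A) = a \<cdot>\<^sub>m transpose_mat (A :: complex mat)"
  by (rule eq_matI) auto

lemma gam_smult: "A \<in> carrier_mat 4 4 \<Longrightarrow> gam (z \<cdot>\<^sub>m A) = (z * z) \<cdot>\<^sub>m gam A"
  unfolding gam_def
  by (simp add: transpose_smult4 mult_smult_assoc_mat[of _ 4 4 _ 4] mult_smult_distrib[of _ 4 4 _ 4] smult_smult4)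

lemma cnot_count:
  assumes U: "U \<in> carrier_mat 4 4" and h1: "t1 U \<noteq> 0" and h2: "t1 U * t1 U \<noteq> 4 * t2 U"
    and imp: "implements_up_to_phase c U"
  shows "length (filter is_cnot c) \<ge> 2"
proof (rule ccontr)
  assume "\<not> ?thesis"
  then have le: "length (filter is_cnot c) \<le> 1" by simp
  obtain z where z: "cmod z = 1" "circuit_mat c = z \<cdot>\<^sub>m U"
    using imp unfolding implements_up_to_phase_def by blast
  have z0: "z \<noteq> 0" using z by auto
  have e1: "t1 (circuit_mat c) = (z * z) * t1 U"
    using U by (simp add: z(2) t1_def gam_smult tr4_smult)
  have e2: "t2 (circuit_mat c) = (z * z) * (z * z) * t2 U"
    using U by (simp add: z(2) t2_def gam_smult tr4_smult mult_smult_assoc_mat[of _ 4 4 _ 4] mult_smult_distrib[of _ 4 4 _ 4] smult_smult4)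
  from few_cnot_inv[OF le] show False
  proof
    assume a: "t1 (circuit_mat c) = 4 \<and> t2 (circuit_mat c) = 4"
    then have "((z * z) * t1 U) * ((z * z) * t1 U) = 4 * ((z * z) * (z * z) * t2 U)"
      using e1 e2 by simp
    then have "(z * z * (z * z)) * (t1 U * t1 U - 4 * t2 U) = 0" by (simp add: algebra_simps)
    then show False using z0 h2 by simp
  next
    assume "t1 (circuit_mat c) = 0"
    then show False using e1 z0 h1 by simp
  qed
qed



lemma chain_bl: "bounded_linear g \<Longrightarrow> f differentiable (at y) \<Longrightarrow> (\<lambda>y. g (f y)) differentiable (at y)"
proof -
  assume g: "bounded_linear g" and f: "f differentiable (at y)"
  have "(g \<circ> f) differentiable (at y)"
    by (rule differentiable_chain_at[OF f bounded_linear_imp_differentiable[OF g]])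
  then show ?thesis by (simp add: o_def)
qed

lemma d_ofreal: "(f :: 'a::real_normed_vector \<Rightarrow> real) differentiable (at y) \<Longrightarrow> (\<lambda>y. complex_of_real (f y)) differentiable (at y)"
  by (rule chain_bl[OF bounded_linear_of_real])

lemma d_cos: "(f :: 'a::real_normed_vector \<Rightarrow> real) differentiable (at y) \<Longrightarrow> (\<lambda>y. cos (f y)) differentiable (at y)"
proof -
  assume f: "f differentiable (at y)"
  have "cos differentiable (at z)" for z :: real
    using DERIV_cos field_differentiable_def field_differentiable_imp_differentiable by blast
  then have "(cos \<circ> f) differentiable (at y)" by (rule differentiable_chain_at[OF f])
  then show ?thesis by (simp add: o_def)
qed
lemma d_sin: "(f :: 'a::real_normed_vector \<Rightarrow> real) differentiable (at y) \<Longrightarrow> (\<lambda>y. sin (f y)) differentiable (at y)"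
proof -
  assume f: "f differentiable (at y)"
  have "sin differentiable (at z)" for z :: real
    using DERIV_sin field_differentiable_def field_differentiable_imp_differentiable by blast
  then have "(sin \<circ> f) differentiable (at y)" by (rule differentiable_chain_at[OF f])
  then show ?thesis by (simp add: o_def)
qed
lemma d_re: "(f :: 'a::real_normed_vector \<Rightarrow> complex) differentiable (at y) \<Longrightarrow> (\<lambda>y. complex_of_real (Re (f y))) differentiable (at y)"
proof -
  have "bounded_linear (\<lambda>z. complex_of_real (Re z))"
    using bounded_linear_compose[OF bounded_linear_of_real bounded_linear_Re] by (simp add: o_def)
  then show "f differentiable (at y) \<Longrightarrow> ?thesis" by (rule chain_bl)
qed
lemma d_exp: "(f :: 'a::real_normed_vector \<Rightarrow> real) differentiable (at y) \<Longrightarrow> (\<lambda>y. exp (c * complex_of_real (f y))) differentiable (at y)"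
proof -
  assume f: "f differentiable (at y)"
  have g: "(\<lambda>y. c * complex_of_real (f y)) differentiable (at y)"
    using d_ofreal[OF f] by (intro differentiable_mult) auto
  have "exp differentiable (at z)" for z :: complex
    using field_differentiable_imp_differentiable field_differentiable_within_exp by blast
  then have "(exp \<circ> (\<lambda>y. c * complex_of_real (f y))) differentiable (at y)"
    by (rule differentiable_chain_at[OF g])
  then show ?thesis by (simp add: o_def)
qed

lemma d_prod: "finite A \<Longrightarrow> (\<forall>a\<in>A. (f a :: 'a::real_normed_vector \<Rightarrow> complex) differentiable (at y)) \<Longrightarrow>
   (\<lambda>y. \<Prod>a\<in>A. f a y) differentiable (at y)"
  by (induction A rule: finite_induct) auto

definition md :: "'a::real_normed_vector set \<Rightarrow> nat \<Rightarrow> ('a \<Rightarrow> complex mat) \<Rightarrow> bool" where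
  "md S n F \<longleftrightarrow> (\<forall>y. F y \<in> carrier_mat n n) \<and>
     (\<forall>y\<in>S. \<forall>i<n. \<forall>j<n. (\<lambda>y. F y $$ (i,j)) differentiable (at y))"

lemma md_det: assumes "md S n F" "y \<in> S" shows "(\<lambda>y. Determinant.det (F y)) differentiable (at y)"
proof -
  have e: "(\<lambda>y. Determinant.det (F y)) = (\<lambda>y. \<Sum>p \<in> {p. p permutes {0..<n}}. of_int (sign p) * (\<Prod>i = 0..<n. F y $$ (i, p i)))"
    using assms(1) unfolding md_def by (intro ext, subst det_def') auto
  have "\<forall>p\<in>{p. p permutes {0..<n}}. \<forall>i\<in>{0..<n}. (\<lambda>y. F y $$ (i, p i)) differentiable (at y)"
    using assms unfolding md_def by (auto simp: permutes_in_image)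
  then show ?thesis unfolding e
    by (intro differentiable_sum differentiable_mult ballI d_prod)
       (auto simp: finite_permutations)
qed

lemma md_const: "A \<in> carrier_mat n n \<Longrightarrow> md S n (\<lambda>y. A)"
  by (simp add: md_def)

lemma md_mult: assumes F: "md S n F" and G: "md S n G" shows "md S n (\<lambda>y. F y * G y)"
  unfolding md_def
proof (intro conjI ballI allI impI)
  fix y
  have "F y \<in> carrier_mat n n" "G y \<in> carrier_mat n n" using F G unfolding md_def by auto
  then show "F y * G y \<in> carrier_mat n n" by (rule mult_carrier_mat)
next
  fix y i j assume y: "y \<in> S" and ij: "i < n" "j < n"
  have "(\<lambda>y. (F y * G y) $$ (i,j)) = (\<lambda>y. \<Sum>k\<in>{0..<n}. F y $$ (i,k) * G y $$ (k,j))"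
  proof
    fix y
    have "F y \<in> carrier_mat n n" "G y \<in> carrier_mat n n" using F G unfolding md_def by auto
    then show "(F y * G y) $$ (i,j) = (\<Sum>k\<in>{0..<n}. F y $$ (i,k) * G y $$ (k,j))"
      using ij by (simp add: scalar_prod_def)
  qed
  moreover have "(\<lambda>y. \<Sum>k\<in>{0..<n}. F y $$ (i,k) * G y $$ (k,j)) differentiable at y"
    using F G y ij unfolding md_def by (intro differentiable_sum ballI differentiable_mult) auto
  ultimately show "(\<lambda>y. (F y * G y) $$ (i,j)) differentiable at y" by simp
qed

lemma md_add: assumes F: "md S n F" and G: "md S n G" shows "md S n (\<lambda>y. F y + G y)"
  unfolding md_def
proof (intro conjI ballI allI impI)
  fix y
  have "F y \<in> carrier_mat n n" "G y \<in> carrier_mat n n" using F G unfolding md_def by auto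
  then show "F y + G y \<in> carrier_mat n n" by simp
next
  fix y i j assume y: "y \<in> S" and ij: "i < n" "j < n"
  have "(\<lambda>y. (F y + G y) $$ (i,j)) = (\<lambda>y. F y $$ (i,j) + G y $$ (i,j))"
  proof
    fix y
    have "F y \<in> carrier_mat n n" "G y \<in> carrier_mat n n" using F G unfolding md_def by auto
    then show "(F y + G y) $$ (i,j) = F y $$ (i,j) + G y $$ (i,j)" using ij by simp
  qed
  moreover have "(\<lambda>y. F y $$ (i,j) + G y $$ (i,j)) differentiable at y"
    using F G y ij unfolding md_def by (intro differentiable_add) auto
  ultimately show "(\<lambda>y. (F y + G y) $$ (i,j)) differentiable at y" by simp
qed

lemma md_minus: assumes F: "md S n F" and G: "md S n G" shows "md S n (\<lambda>y. F y - G y)"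
  unfolding md_def
proof (intro conjI ballI allI impI)
  fix y
  have "F y \<in> carrier_mat n n" "G y \<in> carrier_mat n n" using F G unfolding md_def by auto
  then show "F y - G y \<in> carrier_mat n n" by (intro minus_carrier_mat)
next
  fix y i j assume y: "y \<in> S" and ij: "i < n" "j < n"
  have "(\<lambda>y. (F y - G y) $$ (i,j)) = (\<lambda>y. F y $$ (i,j) - G y $$ (i,j))"
  proof
    fix y
    have "F y \<in> carrier_mat n n" "G y \<in> carrier_mat n n" using F G unfolding md_def by auto
    then show "(F y - G y) $$ (i,j) = F y $$ (i,j) - G y $$ (i,j)" using ij by simp
  qed
  moreover have "(\<lambda>y. F y $$ (i,j) - G y $$ (i,j)) differentiable at y"
    using F G y ij unfolding md_def by (intro differentiable_diff) auto
  ultimately show "(\<lambda>y. (F y - G y) $$ (i,j)) differentiable at y" by simp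
qed

lemma md_smult: assumes F: "md S n F" and s: "\<forall>y\<in>S. s differentiable (at y)"
  shows "md S n (\<lambda>y. s y \<cdot>\<^sub>m F y)"
  unfolding md_def
proof (intro conjI ballI allI impI)
  fix y show "s y \<cdot>\<^sub>m F y \<in> carrier_mat n n" using F unfolding md_def by simp
next
  fix y i j assume y: "y \<in> S" and ij: "i < n" "j < n"
  have "(\<lambda>y. (s y \<cdot>\<^sub>m F y) $$ (i,j)) = (\<lambda>y. s y * F y $$ (i,j))"
  proof
    fix y
    have "F y \<in> carrier_mat n n" using F unfolding md_def by auto
    then show "(s y \<cdot>\<^sub>m F y) $$ (i,j) = s y * F y $$ (i,j)" using ij by simp
  qed
  moreover have "(\<lambda>y. s y * F y $$ (i,j)) differentiable at y"
    using F s y ij unfolding md_def by (intro differentiable_mult) auto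
  ultimately show "(\<lambda>y. (s y \<cdot>\<^sub>m F y) $$ (i,j)) differentiable at y" by simp
qed

lemma md_delete: assumes F: "md S (Suc n) F" and i: "i < Suc n" and j: "j < Suc n"
  shows "md S n (\<lambda>y. mat_delete (F y) i j)"
  unfolding md_def
proof (intro conjI ballI allI impI)
  fix y show "mat_delete (F y) i j \<in> carrier_mat n n"
    using mat_delete_carrier[of "F y" "Suc n" "Suc n" i j] F unfolding md_def by auto
next
  fix y ia ja assume y: "y \<in> S" and ij: "ia < n" "ja < n"
  have "(\<lambda>y. mat_delete (F y) i j $$ (ia,ja)) =
        (\<lambda>y. F y $$ (if ia < i then ia else Suc ia, if ja < j then ja else Suc ja))"
  proof
    fix y
    have "F y \<in> carrier_mat (Suc n) (Suc n)" using F unfolding md_def by auto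
    then show "mat_delete (F y) i j $$ (ia,ja) = F y $$ (if ia < i then ia else Suc ia, if ja < j then ja else Suc ja)"
      using ij by (simp add: mat_delete_def)
  qed
  moreover have "(\<lambda>y. F y $$ (if ia < i then ia else Suc ia, if ja < j then ja else Suc ja)) differentiable at y"
    using F y ij unfolding md_def by auto
  ultimately show "(\<lambda>y. mat_delete (F y) i j $$ (ia,ja)) differentiable at y" by simp
qed

lemma md_adj: assumes "md S n F" shows "md S n (\<lambda>y. adj_mat (F y))"
proof (cases n)
  case 0
  then show ?thesis using assms adj_mat(1) unfolding md_def by auto
next
  case (Suc m)
  show ?thesis unfolding md_def
  proof (intro conjI allI ballI impI)
    fix y show "adj_mat (F y) \<in> carrier_mat n n" using assms adj_mat(1) unfolding md_def by blast
  next
    fix y i j assume y: "y \<in> S" and ij: "i < n" "j < n"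
    have "(\<lambda>y. adj_mat (F y) $$ (i,j)) = (\<lambda>y. (-1)^(j+i) * Determinant.det (mat_delete (F y) j i))"
    proof
      fix y
      have "F y \<in> carrier_mat n n" using assms unfolding md_def by auto
      then show "adj_mat (F y) $$ (i,j) = (-1)^(j+i) * Determinant.det (mat_delete (F y) j i)"
        using ij by (simp add: adj_mat_def cofactor_def)
    qed
    moreover have "md S m (\<lambda>y. mat_delete (F y) j i)"
      using md_delete[of S m F j i] assms ij Suc by auto
    ultimately show "(\<lambda>y. adj_mat (F y) $$ (i,j)) differentiable (at y)"
      using md_det[of S m _ y] y by auto
  qed
qed



fun hd0 :: "real list \<Rightarrow> real" where "hd0 [] = 0" | "hd0 (a # _) = a"

fun inst :: "gate list \<Rightarrow> real list \<Rightarrow> gate list" where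
  "inst [] as = []"
| "inst (RY1 t # s) as = RY1 (hd0 as) # inst s (tl as)"
| "inst (RY2 t # s) as = RY2 (hd0 as) # inst s (tl as)"
| "inst (RZ1 t # s) as = RZ1 (hd0 as) # inst s (tl as)"
| "inst (RZ2 t # s) as = RZ2 (hd0 as) # inst s (tl as)"
| "inst (CNOT1 # s) as = CNOT1 # inst s as"
| "inst (CNOT2 # s) as = CNOT2 # inst s as"

fun angles :: "gate list \<Rightarrow> real list" where
  "angles [] = []"
| "angles (RY1 t # s) = t # angles s"
| "angles (RY2 t # s) = t # angles s"
| "angles (RZ1 t # s) = t # angles s"
| "angles (RZ2 t # s) = t # angles s"
| "angles (CNOT1 # s) = angles s"
| "angles (CNOT2 # s) = angles s"

fun shape :: "gate \<Rightarrow> gate" where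
  "shape (RY1 t) = RY1 0" | "shape (RY2 t) = RY2 0" | "shape (RZ1 t) = RZ1 0"
| "shape (RZ2 t) = RZ2 0" | "shape CNOT1 = CNOT1" | "shape CNOT2 = CNOT2"

lemma inst_angles: "inst (map shape c) (angles c @ zs) = c"
proof (induction c)
  case Nil then show ?case by simp
next
  case (Cons g c) then show ?case by (cases g) auto
qed

lemma length_angles: "length (angles c) = length (filter (\<lambda>g. \<not> is_cnot g) c)"
proof (induction c)
  case Nil then show ?case by simp
next
  case (Cons g c) then show ?case by (cases g) auto
qed

lemma range_shape: "range shape \<subseteq> {RY1 0, RY2 0, RZ1 0, RZ2 0, CNOT1, CNOT2}"
proof
  fix x assume "x \<in> range shape"
  then obtain g where "x = shape g" by auto
  then show "x \<in> {RY1 0, RY2 0, RZ1 0, RZ2 0, CNOT1, CNOT2}" by (cases g) auto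
qed

lemma countable_shapes: "countable (lists (range shape))"
  using range_shape by (intro countable_lists countable_finite) (auto intro: finite_subset)

lemma map_shape_in: "map shape c \<in> lists (range shape)" by auto

lemma d_half: "(a :: 'a::real_normed_vector \<Rightarrow> real) differentiable (at y) \<Longrightarrow> (\<lambda>y. a y / 2) differentiable (at y)"
  by (simp add: differentiable_divide)

lemma d_expp: "(a :: 'a::real_normed_vector \<Rightarrow> real) differentiable (at y) \<Longrightarrow> (\<lambda>y. exp (\<i> * complex_of_real (a y) / 2)) differentiable (at y)"
  using d_exp[of a y "\<i> / 2"] by (simp add: mult.commute)
lemma d_expm: "(a :: 'a::real_normed_vector \<Rightarrow> real) differentiable (at y) \<Longrightarrow> (\<lambda>y. exp (- (\<i> * complex_of_real (a y) / 2))) differentiable (at y)"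
  using d_exp[of a y "- \<i> / 2"] by (simp add: mult.commute)

lemma md_RY1: "(\<forall>y. a differentiable (at y)) \<Longrightarrow> md UNIV 4 (\<lambda>y. gate_mat (RY1 (a y)))"
  unfolding md_def by (simp add: all4, simp add: gsimps d_ofreal d_cos d_sin d_half)
lemma md_RY2: "(\<forall>y. a differentiable (at y)) \<Longrightarrow> md UNIV 4 (\<lambda>y. gate_mat (RY2 (a y)))"
  unfolding md_def by (simp add: all4, simp add: gsimps d_ofreal d_cos d_sin d_half)
lemma md_RZ1: "(\<forall>y. a differentiable (at y)) \<Longrightarrow> md UNIV 4 (\<lambda>y. gate_mat (RZ1 (a y)))"
  unfolding md_def by (simp add: all4, simp add: gsimps d_expp d_expm)
lemma md_RZ2: "(\<forall>y. a differentiable (at y)) \<Longrightarrow> md UNIV 4 (\<lambda>y. gate_mat (RZ2 (a y)))"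
  unfolding md_def by (simp add: all4, simp add: gsimps d_expp d_expm)

lemma hd0_map: "hd0 (map (\<lambda>f. f y) fs) = (if fs = [] then 0 else hd fs y)"
  by (cases fs) auto

lemma md_circ: "(\<forall>f\<in>set fs. \<forall>y. f differentiable (at y)) \<Longrightarrow>
   md UNIV 4 (\<lambda>y. circuit_mat (inst s (map (\<lambda>f. f y) fs)))"
proof (induction s arbitrary: fs)
  case Nil
  then show ?case by (simp add: circuit_Nil md_const)
next
  case (Cons g s)
  let ?a = "\<lambda>y. if fs = [] then 0 else hd fs y"
  have a: "\<forall>y. ?a differentiable (at y)"
    using Cons.prems by (cases fs) auto
  have tl: "\<forall>f\<in>set (tl fs). \<forall>y. f differentiable (at y)"
    using Cons.prems by (cases fs) auto
  have IH1: "md UNIV 4 (\<lambda>y. circuit_mat (inst s (map (\<lambda>f. f y) (tl fs))))"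
    using Cons.IH[OF tl] .
  have IH2: "md UNIV 4 (\<lambda>y. circuit_mat (inst s (map (\<lambda>f. f y) fs)))"
    using Cons.IH[OF Cons.prems] .
  show ?case
  proof (cases g)
    case (RY1 x1)
    then show ?thesis using md_mult[OF md_RY1[OF a] IH1] by (simp add: circuit_Cons hd0_map map_tl)
  next
    case (RY2 x2)
    then show ?thesis using md_mult[OF md_RY2[OF a] IH1] by (simp add: circuit_Cons hd0_map map_tl)
  next
    case (RZ1 x3)
    then show ?thesis using md_mult[OF md_RZ1[OF a] IH1] by (simp add: circuit_Cons hd0_map map_tl)
  next
    case (RZ2 x4)
    then show ?thesis using md_mult[OF md_RZ2[OF a] IH1] by (simp add: circuit_Cons hd0_map map_tl)
  next
    case CNOT1
    then show ?thesis using md_mult[OF md_const[OF gate_carrier[of CNOT1]] IH2] by (simp add: circuit_Cons)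
  next
    case CNOT2
    then show ?thesis using md_mult[OF md_const[OF gate_carrier[of CNOT2]] IH2] by (simp add: circuit_Cons)
  qed
qed

definition h15 :: "nat \<Rightarrow> 15" where
  "h15 = (SOME h. bij_betw h {0..<15} (UNIV :: 15 set))"

lemma h15_bij: "bij_betw h15 {0..<15} (UNIV :: 15 set)"
proof -
  have "\<exists>h. bij_betw h {0..<card (UNIV :: 15 set)} (UNIV :: 15 set)"
    by (rule ex_bij_betw_nat_finite) simp
  then have "\<exists>h. bij_betw h {0..<(15::nat)} (UNIV :: 15 set)" by simp
  then show ?thesis unfolding h15_def by (rule someI_ex)
qed

definition fs15 :: "(real^15 \<Rightarrow> real) list" where
  "fs15 = map (\<lambda>k y. y $ h15 k) [0..<14]"

definition Pc :: "gate list \<Rightarrow> real^15 \<Rightarrow> complex mat" where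
  "Pc s y = cis (y $ h15 14) \<cdot>\<^sub>m circuit_mat (inst s (map (\<lambda>f. f y) fs15))"

lemma d_nth: "(\<lambda>y::real^15. y $ k) differentiable (at y)"
  using bounded_linear_imp_differentiable[OF bounded_linear_vec_nth] by blast

lemma md_Pc: "md UNIV 4 (Pc s)"
proof -
  have "\<forall>f\<in>set fs15. \<forall>y. f differentiable (at y)" unfolding fs15_def using d_nth by auto
  from md_circ[OF this, of s] have "md UNIV 4 (\<lambda>y. circuit_mat (inst s (map (\<lambda>f. f y) fs15)))" .
  moreover have "\<forall>y\<in>UNIV. (\<lambda>y::real^15. cis (y $ h15 14)) differentiable (at y)"
    unfolding cis_conv_exp using d_exp[OF d_nth] by auto
  ultimately show ?thesis unfolding Pc_def[abs_def] by (rule md_smult)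
qed

lemma smult_one4: "(1::complex) \<cdot>\<^sub>m A = A" by (rule eq_matI) auto

lemma Pc_surj:
  assumes len: "length (angles c) \<le> 14" and z: "cmod z = 1" and cz: "circuit_mat c = z \<cdot>\<^sub>m U"
  shows "\<exists>y. Pc (map shape c) y = U"
proof -
  let ?L = "angles c @ replicate 14 0"
  let ?inv = "the_inv_into {0..<15} h15"
  have inj: "inj_on h15 {0..<15}" using h15_bij bij_betw_def by blast
  define y :: "real^15" where "y = (\<chi> j. if ?inv j < 14 then ?L ! (?inv j) else - Arg z)"
  have yk: "y $ h15 k = ?L ! k" if "k < 14" for k
    using that the_inv_into_f_f[OF inj, of k] unfolding y_def by auto
  have y14: "y $ h15 14 = - Arg z"
    using the_inv_into_f_f[OF inj, of 14] unfolding y_def by auto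
  have "map (\<lambda>f. f y) fs15 = map (\<lambda>k. ?L ! k) [0..<14]"
    unfolding fs15_def using yk by simp
  also have "\<dots> = angles c @ replicate (14 - length (angles c)) 0"
    using len by (intro nth_equalityI) (auto simp: nth_append)
  finally have m: "map (\<lambda>f. f y) fs15 = angles c @ replicate (14 - length (angles c)) 0" .
  have z0: "z \<noteq> 0" using z by auto
  have zc: "z = cis (Arg z)" using cis_Arg[OF z0] z by (simp add: sgn_div_norm)
  have "cis (- Arg z) * z = 1" by (subst zc) (simp add: cis_mult)
  then have "Pc (map shape c) y = U"
    unfolding Pc_def m inst_angles y14 cz smult_smult4 by (simp add: smult_one4)
  then show ?thesis by blast
qed



type_synonym c8 = "complex \<times> complex \<times> complex \<times> complex \<times> complex \<times> complex \<times> complex \<times> complex"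

definition c0 :: "c8 \<Rightarrow> complex" where "c0 x = fst x"
definition c1 :: "c8 \<Rightarrow> complex" where "c1 x = fst (snd x)"
definition c2 :: "c8 \<Rightarrow> complex" where "c2 x = fst (snd (snd x))"
definition c3 :: "c8 \<Rightarrow> complex" where "c3 x = fst (snd (snd (snd x)))"
definition c4 :: "c8 \<Rightarrow> complex" where "c4 x = fst (snd (snd (snd (snd x))))"
definition c5 :: "c8 \<Rightarrow> complex" where "c5 x = fst (snd (snd (snd (snd (snd x)))))"
definition c6 :: "c8 \<Rightarrow> complex" where "c6 x = fst (snd (snd (snd (snd (snd (snd x))))))"
definition c7 :: "c8 \<Rightarrow> complex" where "c7 x = snd (snd (snd (snd (snd (snd (snd x))))))"

lemmas cdefs = c0_def c1_def c2_def c3_def c4_def c5_def c6_def c7_def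

lemma c_bl: "bounded_linear c0" "bounded_linear c1" "bounded_linear c2" "bounded_linear c3"
  "bounded_linear c4" "bounded_linear c5" "bounded_linear c6" "bounded_linear c7"
  unfolding cdefs[abs_def]
  by (auto intro!: bounded_linear_compose[OF bounded_linear_fst] bounded_linear_compose[OF bounded_linear_snd]
      bounded_linear_fst bounded_linear_snd simp: o_def)

definition Hm :: "c8 \<Rightarrow> complex mat" where
  "Hm x = mat_of_rows_list 4
    [[complex_of_real (Re (c6 x)), c0 x, c1 x, c2 x],
     [cnj (c0 x), complex_of_real (Im (c6 x)), c3 x, c4 x],
     [cnj (c1 x), cnj (c3 x), complex_of_real (Re (c7 x)), c5 x],
     [cnj (c2 x), cnj (c4 x), cnj (c5 x), complex_of_real (Im (c7 x))]]"

definition Am :: "c8 \<Rightarrow> complex mat" where "Am x = 1\<^sub>m 4 + \<i> \<cdot>\<^sub>m Hm x"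
definition Bm :: "c8 \<Rightarrow> complex mat" where "Bm x = 1\<^sub>m 4 - \<i> \<cdot>\<^sub>m Hm x"
definition Gc :: "c8 \<Rightarrow> complex mat" where
  "Gc x = (1 / Determinant.det (Am x)) \<cdot>\<^sub>m (Bm x * adj_mat (Am x))"

definition KK :: "complex mat \<Rightarrow> complex mat" where
  "KK U = (- \<i> / Determinant.det (1\<^sub>m 4 + U)) \<cdot>\<^sub>m (adj_mat (1\<^sub>m 4 + U) * (1\<^sub>m 4 - U))"

definition phi :: "complex mat \<Rightarrow> c8" where
  "phi U = (KK U $$ (0,1), KK U $$ (0,2), KK U $$ (0,3), KK U $$ (1,2), KK U $$ (1,3), KK U $$ (2,3),
     complex_of_real (Re (KK U $$ (0,0))) + \<i> * complex_of_real (Re (KK U $$ (1,1))),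
     complex_of_real (Re (KK U $$ (2,2))) + \<i> * complex_of_real (Re (KK U $$ (3,3))))"

lemma Hm_dims[simp]: "dim_row (Hm x) = 4" "dim_col (Hm x) = 4"
  by (simp_all add: Hm_def mat_of_rows_list_def)
lemma Hm_c[simp]: "Hm x \<in> carrier_mat 4 4" by (rule carrier_matI) simp_all
lemma Am_c[simp]: "Am x \<in> carrier_mat 4 4" by (simp add: Am_def)
lemma Bm_c[simp]: "Bm x \<in> carrier_mat 4 4" by (simp add: Bm_def)
lemma adj_c[simp]: "A \<in> carrier_mat 4 4 \<Longrightarrow> adj_mat A \<in> carrier_mat 4 4" using adj_mat(1) by blast
lemma Gc_c[simp]: "Gc x \<in> carrier_mat 4 4" by (simp add: Gc_def)
lemma Gc_dims[simp]: "dim_row (Gc x) = 4" "dim_col (Gc x) = 4"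
  by (rule carrier_matD(1)[OF Gc_c], rule carrier_matD(2)[OF Gc_c])

lemma adj_right: "A \<in> carrier_mat 4 4 \<Longrightarrow> A * adj_mat A = Determinant.det A \<cdot>\<^sub>m 1\<^sub>m 4" using adj_mat(2) by blast
lemma adj_left: "A \<in> carrier_mat 4 4 \<Longrightarrow> adj_mat A * A = Determinant.det A \<cdot>\<^sub>m 1\<^sub>m 4" using adj_mat(3) by blast

lemma smult_cancel4: assumes a: "a \<noteq> 0" and X: "X \<in> carrier_mat 4 4" and Y: "Y \<in> carrier_mat 4 4"
  and e: "a \<cdot>\<^sub>m X = a \<cdot>\<^sub>m (Y :: complex mat)" shows "X = Y"
proof (rule eq_matI)
  fix i j assume ij: "i < dim_row Y" "j < dim_col Y"
  have "(a \<cdot>\<^sub>m X) $$ (i,j) = (a \<cdot>\<^sub>m Y) $$ (i,j)" using e by simp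
  then show "X $$ (i,j) = Y $$ (i,j)" using X Y a ij by simp
qed (use X Y in auto)

lemma smult_one4': "(1::complex) \<cdot>\<^sub>m A = A" by (rule eq_matI) auto

lemma Gc_A: assumes d: "Determinant.det (Am x) \<noteq> 0" shows "Gc x * Am x = Bm x"
proof -
  have "Gc x * Am x = (1 / Determinant.det (Am x)) \<cdot>\<^sub>m (Bm x * (adj_mat (Am x) * Am x))"
    unfolding Gc_def by (simp add: mult_smult_assoc_mat[of _ 4 4 _ 4] assoc4)
  also have "\<dots> = Bm x" using d
    by (simp add: adj_left mult_smult_distrib[of _ 4 4 _ 4] smult_smult4 smult_one4')
  finally show ?thesis .
qed

lemma Gc_eqI: assumes d: "Determinant.det (Am x) \<noteq> 0" and D: "D \<in> carrier_mat 4 4"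
  and DA: "D * Am x = Bm x" shows "Gc x = D"
proof -
  have "Gc x = (1 / Determinant.det (Am x)) \<cdot>\<^sub>m (D * (Am x * adj_mat (Am x)))"
    unfolding Gc_def DA[symmetric] using D by (simp add: assoc4)
  also have "\<dots> = D" using d D
    by (simp add: adj_right mult_smult_distrib[of _ 4 4 _ 4] smult_smult4 smult_one4')
  finally show ?thesis .
qed

lemma adj4_c[simp]: "U \<in> carrier_mat 4 4 \<Longrightarrow> adjoint4 U \<in> carrier_mat 4 4"
  by (simp add: adjoint4_def)

lemma adj4_mult: "A \<in> carrier_mat 4 4 \<Longrightarrow> B \<in> carrier_mat 4 4 \<Longrightarrow>
   adjoint4 (A * B) = adjoint4 B * adjoint4 A"
  by (rule eq_matI) (auto simp: adjoint4_def scalar_prod_def mult.commute intro!: sum.cong)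

lemma adjA: "adjoint4 (Am x) = Bm x"
  apply (rule eq4I)
  prefer 5 apply (unfold all4)
  apply (simp_all add: adjoint4_def Am_def Bm_def Hm_def mat_of_rows_list_def)
  done
lemma adjB: "adjoint4 (Bm x) = Am x"
  apply (rule eq4I)
  prefer 5 apply (unfold all4)
  apply (simp_all add: adjoint4_def Am_def Bm_def Hm_def mat_of_rows_list_def)
  done

lemma comm_pm: "(X :: complex mat) \<in> carrier_mat 4 4 \<Longrightarrow> (1\<^sub>m 4 + X) * (1\<^sub>m 4 - X) = (1\<^sub>m 4 - X) * (1\<^sub>m 4 + X)"
  by (rule eq4I, simp_all add: mult4 sum4 all4 del: index_mult_mat(1), simp add: algebra_simps)

lemma AB_comm: "Am x * Bm x = Bm x * Am x"
  unfolding Am_def Bm_def by (rule comm_pm) simp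

lemma lcancel: assumes P: "(P :: complex mat) \<in> carrier_mat 4 4" and X: "X \<in> carrier_mat 4 4" and Y: "Y \<in> carrier_mat 4 4"
  and d: "Determinant.det P \<noteq> 0" and e: "P * X = P * Y" shows "X = Y"
proof -
  have "adj_mat P * (P * X) = Determinant.det P \<cdot>\<^sub>m X"
    using P X by (simp add: assoc4[symmetric] adj_left mult_smult_assoc_mat[of _ 4 4 _ 4])
  moreover have "adj_mat P * (P * Y) = Determinant.det P \<cdot>\<^sub>m Y"
    using P Y by (simp add: assoc4[symmetric] adj_left mult_smult_assoc_mat[of _ 4 4 _ 4])
  ultimately have "Determinant.det P \<cdot>\<^sub>m X = Determinant.det P \<cdot>\<^sub>m Y" using e by simp
  then show ?thesis by (rule smult_cancel4[OF d X Y])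
qed

lemma rcancel: assumes Q: "(Q :: complex mat) \<in> carrier_mat 4 4" and X: "X \<in> carrier_mat 4 4" and Y: "Y \<in> carrier_mat 4 4"
  and d: "Determinant.det Q \<noteq> 0" and e: "X * Q = Y * Q" shows "X = Y"
proof -
  have "(X * Q) * adj_mat Q = Determinant.det Q \<cdot>\<^sub>m X"
    using Q X by (simp add: assoc4 adj_right mult_smult_distrib[of _ 4 4 _ 4])
  moreover have "(Y * Q) * adj_mat Q = Determinant.det Q \<cdot>\<^sub>m Y"
    using Q Y by (simp add: assoc4 adj_right mult_smult_distrib[of _ 4 4 _ 4])
  ultimately have "Determinant.det Q \<cdot>\<^sub>m X = Determinant.det Q \<cdot>\<^sub>m Y" using e by simp
  then show ?thesis by (rule smult_cancel4[OF d X Y])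
qed

lemma Gc_unitary: assumes dA: "Determinant.det (Am x) \<noteq> 0" and dB: "Determinant.det (Bm x) \<noteq> 0"
  shows "unitary4 (Gc x)"
proof -
  let ?U = "Gc x" and ?V = "adjoint4 (Gc x)" and ?A = "Am x" and ?B = "Bm x"
  have UA: "?U * ?A = ?B" using Gc_A[OF dA] .
  have BV: "?B * ?V = ?A"
    using arg_cong[OF UA, of adjoint4] by (simp add: adj4_mult adjA adjB)
  have "?B * (?V * ?U) * ?A = (?B * ?V) * (?U * ?A)" by (simp add: assoc4)
  also have "\<dots> = ?B * ?A" using BV UA AB_comm by simp
  finally have e: "?B * (?V * ?U) * ?A = ?B * ?A" .
  have "?B * (?V * ?U) = ?B" by (rule rcancel[OF Am_c _ Bm_c dA e]) simp
  then have "?B * (?V * ?U) = ?B * 1\<^sub>m 4" by simp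
  then have VU: "?V * ?U = 1\<^sub>m 4" by (rule lcancel[OF Bm_c _ c4_one dB, rotated]) simp
  have "?U * ?V = 1\<^sub>m 4" by (rule mat_mult_left_right_inverse[OF adj4_c[OF Gc_c] Gc_c VU])
  then show ?thesis unfolding unitary4_def by simp
qed

lemma AB_sum: "Am x + Bm x = 2 \<cdot>\<^sub>m 1\<^sub>m 4"
  by (rule eq_matI) (auto simp: Am_def Bm_def)

lemma det_one_plus: assumes dA: "Determinant.det (Am x) \<noteq> 0"
  shows "Determinant.det (1\<^sub>m 4 + Gc x) \<noteq> 0"
proof -
  have "(1\<^sub>m 4 + Gc x) * Am x = Am x + Gc x * Am x"
    by (simp add: add_mult_distrib_mat[of "1\<^sub>m 4" 4 4 "Gc x" "Am x" 4])
  also have "\<dots> = 2 \<cdot>\<^sub>m 1\<^sub>m 4" using Gc_A[OF dA] AB_sum by simp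
  finally have "Determinant.det (1\<^sub>m 4 + Gc x) * Determinant.det (Am x) = 16"
    using det_mult[of "1\<^sub>m 4 + Gc x" 4 "Am x"] by simp
  then show ?thesis by auto
qed

lemma KK_eq: assumes dA: "Determinant.det (Am x) \<noteq> 0" shows "KK (Gc x) = Hm x"
proof -
  let ?U = "Gc x" and ?H = "Hm x"
  let ?P = "1\<^sub>m 4 + ?U"
  have dP: "Determinant.det ?P \<noteq> 0" using det_one_plus[OF dA] .
  have P: "?P \<in> carrier_mat 4 4" by simp
  have e1: "?P * KK ?U = (- \<i>) \<cdot>\<^sub>m (1\<^sub>m 4 - ?U)"
  proof -
    have "?P * KK ?U = (- \<i> / Determinant.det ?P) \<cdot>\<^sub>m ((?P * adj_mat ?P) * (1\<^sub>m 4 - ?U))"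
      unfolding KK_def by (simp add: mult_smult_distrib[of _ 4 4 _ 4] assoc4)
    also have "\<dots> = (- \<i>) \<cdot>\<^sub>m (1\<^sub>m 4 - ?U)"
      using dP by (simp add: adj_right mult_smult_assoc_mat[of _ 4 4 _ 4] smult_smult4)
    finally show ?thesis .
  qed
  have UA: "?U * Am x = Bm x" using Gc_A[OF dA] .
  have UA': "?U * Am x = ?U + \<i> \<cdot>\<^sub>m (?U * ?H)"
    unfolding Am_def by (simp add: mult_add_distrib_mat[of "Gc x" 4 4 "1\<^sub>m 4" 4 "\<i> \<cdot>\<^sub>m Hm x"] mult_smult_distrib[of _ 4 4 _ 4])
  have PH: "?P * ?H = ?H + ?U * ?H"
    by (simp add: add_mult_distrib_mat[of "1\<^sub>m 4" 4 4 "Gc x" "Hm x" 4])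
  have e2: "?P * ?H = (- \<i>) \<cdot>\<^sub>m (1\<^sub>m 4 - ?U)"
  proof (rule eq_matI)
    fix i j assume ij: "i < dim_row ((- \<i>) \<cdot>\<^sub>m (1\<^sub>m 4 - ?U))" "j < dim_col ((- \<i>) \<cdot>\<^sub>m (1\<^sub>m 4 - ?U))"
    then have ij4: "i < 4" "j < 4" by auto
    have "(?U + \<i> \<cdot>\<^sub>m (?U * ?H)) $$ (i,j) = Bm x $$ (i,j)" using UA UA' by simp
    then have h: "?U $$ (i,j) + \<i> * (?U * ?H) $$ (i,j) = 1\<^sub>m 4 $$ (i,j) - \<i> * ?H $$ (i,j)"
      using ij4 by (simp add: Bm_def)
    have "(?U * ?H) $$ (i,j) = - \<i> * (1\<^sub>m 4 $$ (i,j) - \<i> * ?H $$ (i,j) - ?U $$ (i,j))"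
      using arg_cong[OF h, of "\<lambda>t. - \<i> * (t - ?U $$ (i,j))"] by (simp add: algebra_simps)
    then show "(?P * ?H) $$ (i,j) = ((- \<i>) \<cdot>\<^sub>m (1\<^sub>m 4 - ?U)) $$ (i,j)"
      unfolding PH using ij4 by (simp add: algebra_simps)
  qed auto
  have "?P * KK ?U = ?P * ?H" using e1 e2 by simp
  from lcancel[OF P _ Hm_c dP this] show ?thesis by (simp add: KK_def)
qed

lemma phi_Gc: assumes dA: "Determinant.det (Am x) \<noteq> 0" shows "phi (Gc x) = x"
proof -
  have "phi (Gc x) = (c0 x, c1 x, c2 x, c3 x, c4 x, c5 x, c6 x, c7 x)"
    unfolding phi_def KK_eq[OF dA] by (simp add: Hm_def mat_of_rows_list_def complex_eq_iff)
  also have "\<dots> = x" by (simp add: cdefs)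
  finally show ?thesis .
qed



lemma md_mono: "md UNIV n F \<Longrightarrow> md S n F" unfolding md_def by auto

lemma md_transpose: assumes F: "md S n F" shows "md S n (\<lambda>y. transpose_mat (F y))"
  unfolding md_def
proof (intro conjI ballI allI impI)
  fix y show "transpose_mat (F y) \<in> carrier_mat n n" using F unfolding md_def by auto
next
  fix y i j assume y: "y \<in> S" and ij: "i < n" "j < n"
  have "(\<lambda>y. transpose_mat (F y) $$ (i,j)) = (\<lambda>y. F y $$ (j,i))"
  proof
    fix y
    have "F y \<in> carrier_mat n n" using F unfolding md_def by auto
    then show "transpose_mat (F y) $$ (i,j) = F y $$ (j,i)" using ij by simp
  qed
  moreover have "(\<lambda>y. F y $$ (j,i)) differentiable at y" using F y ij unfolding md_def by auto
  ultimately show "(\<lambda>y. transpose_mat (F y) $$ (i,j)) differentiable at y" by simp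
qed

lemma md_tr4: assumes F: "md S 4 F" and y: "y \<in> S" shows "(\<lambda>y. tr4 (F y)) differentiable (at y)"
  unfolding tr4_def using F y unfolding md_def by (intro differentiable_sum) auto

lemma md_entry: "md S n F \<Longrightarrow> y \<in> S \<Longrightarrow> i < n \<Longrightarrow> j < n \<Longrightarrow> (\<lambda>y. F y $$ (i,j)) differentiable (at y)"
  unfolding md_def by auto

lemma md_gam: "md S 4 F \<Longrightarrow> md S 4 (\<lambda>y. gam (F y))"
  unfolding gam_def by (intro md_mult md_transpose md_const) auto

lemma d_ck: "c0 differentiable (at y)" "c1 differentiable (at y)" "c2 differentiable (at y)"
  "c3 differentiable (at y)" "c4 differentiable (at y)" "c5 differentiable (at y)"
  "c6 differentiable (at y)" "c7 differentiable (at y)"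
  using c_bl by (auto intro: bounded_linear_imp_differentiable)

lemma d_cnj: "(f :: 'a::real_normed_vector \<Rightarrow> complex) differentiable (at y) \<Longrightarrow> (\<lambda>y. cnj (f y)) differentiable (at y)"
  by (rule chain_bl[OF bounded_linear_cnj])
lemma d_im: "(f :: 'a::real_normed_vector \<Rightarrow> complex) differentiable (at y) \<Longrightarrow> (\<lambda>y. complex_of_real (Im (f y))) differentiable (at y)"
proof -
  have "bounded_linear (\<lambda>z. complex_of_real (Im z))"
    using bounded_linear_compose[OF bounded_linear_of_real bounded_linear_Im] by (simp add: o_def)
  then show "f differentiable (at y) \<Longrightarrow> ?thesis" by (rule chain_bl)
qed

lemma md_Hm: "md UNIV 4 Hm"
  unfolding md_def all4
  apply (rule conjI)
   apply simp
  apply (simp add: Hm_def mat_of_rows_list_def d_ck d_cnj d_re d_im)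
  done

lemma md_Am: "md UNIV 4 Am"
  unfolding Am_def[abs_def] by (intro md_add md_const md_smult md_Hm) auto
lemma md_Bm: "md UNIV 4 Bm"
  unfolding Bm_def[abs_def] by (intro md_minus md_const md_smult md_Hm) auto

definition Oset :: "c8 set" where
  "Oset = {x. Determinant.det (Am x) \<noteq> 0} \<inter> {x. Determinant.det (Bm x) \<noteq> 0}"

lemma cont_det: "md UNIV 4 F \<Longrightarrow> continuous_on UNIV (\<lambda>x. Determinant.det (F x))"
  by (intro differentiable_imp_continuous_on differentiable_at_imp_differentiable_on md_det) auto

lemma open_OO: "open Oset"
  unfolding Oset_def
  by (intro open_Int open_Collect_neq cont_det md_Am md_Bm continuous_on_const)

lemma md_Gc: "md Oset 4 Gc"
proof -
  have "md Oset 4 (\<lambda>x. Bm x * adj_mat (Am x))"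
    by (rule md_mono, intro md_mult md_Bm md_adj md_Am)
  moreover have "\<forall>x\<in>Oset. (\<lambda>x. 1 / Determinant.det (Am x)) differentiable (at x)"
    using md_det[OF md_Am] unfolding Oset_def by (auto intro!: differentiable_divide)
  ultimately show ?thesis unfolding Gc_def[abs_def] by (intro md_smult)
qed

definition f1 :: "c8 \<Rightarrow> complex" where "f1 x = t1 (Gc x)"
definition f2 :: "c8 \<Rightarrow> complex" where "f2 x = t1 (Gc x) * t1 (Gc x) - 4 * t2 (Gc x)"

lemma cont_f: "continuous_on Oset f1" "continuous_on Oset f2"
proof -
  have g: "md Oset 4 (\<lambda>x. gam (Gc x))" by (rule md_gam[OF md_Gc])
  have d1: "\<forall>x\<in>Oset. f1 differentiable (at x)"
    unfolding f1_def[abs_def] t1_def using md_tr4[OF g] by auto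
  have d2: "\<forall>x\<in>Oset. (\<lambda>x. t2 (Gc x)) differentiable (at x)"
    unfolding t2_def using md_tr4[OF md_mult[OF g g]] by auto
  have d2': "\<forall>x\<in>Oset. f2 differentiable (at x)"
    unfolding f2_def[abs_def] using d1 d2 unfolding f1_def[abs_def]
    by (auto intro!: differentiable_diff differentiable_mult)
  show "continuous_on Oset f1"
    using d1 by (intro differentiable_imp_continuous_on) (auto simp: differentiable_on_def intro: differentiable_at_withinI)
  show "continuous_on Oset f2"
    using d2' by (intro differentiable_imp_continuous_on) (auto simp: differentiable_on_def intro: differentiable_at_withinI)
qed

definition Eset :: "c8 set" where "Eset = (Oset \<inter> f1 -` (- {0})) \<inter> (Oset \<inter> f2 -` (- {0}))"

lemma open_EE: "open Eset"
  unfolding Eset_def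
  by (intro open_Int continuous_open_preimage cont_f open_OO) auto

definition x0 :: c8 where "x0 = (0, 0, 0, 0, 0, 0, 0, - \<i>)"

definition D0 :: "complex mat" where
  "D0 = Matrix.mat 4 4 (\<lambda>(i,j). if i = j then (if i = 3 then \<i> else 1) else 0)"

lemma D0_dims[simp]: "dim_row D0 = 4" "dim_col D0 = 4" by (simp_all add: D0_def)

lemma Am_x0: "Am x0 = Matrix.mat 4 4 (\<lambda>(i,j). if i = j then (if i = 3 then 1 - \<i> else 1) else 0)"
  apply (rule eq4I)
  prefer 5 apply (unfold all4)
  apply (simp_all add: Am_def Hm_def mat_of_rows_list_def x0_def cdefs)
  done

lemma Bm_x0: "Bm x0 = Matrix.mat 4 4 (\<lambda>(i,j). if i = j then (if i = 3 then 1 + \<i> else 1) else 0)"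
  apply (rule eq4I)
  prefer 5 apply (unfold all4)
  apply (simp_all add: Bm_def Hm_def mat_of_rows_list_def x0_def cdefs)
  done

lemma det_diag4: "Determinant.det (Matrix.mat 4 4 (\<lambda>(i,j). if i = j then (if i = 3 then a else 1) else 0)) = (a :: complex)"
proof -
  let ?M = "Matrix.mat 4 4 (\<lambda>(i,j). if i = j then (if i = 3 then a else 1) else 0) :: complex mat"
  have "upper_triangular ?M" unfolding upper_triangular_def by auto
  then have "Determinant.det ?M = prod_list (diag_mat ?M)" by (rule det_upper_triangular) auto
  also have "\<dots> = a" by (simp add: diag_mat_def upt_rec)
  finally show ?thesis .
qed

lemma x0_OO: "x0 \<in> Oset"
  unfolding Oset_def using det_diag4 by (simp add: Am_x0 Bm_x0 complex_eq_iff)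

lemma Gc_x0: "Gc x0 = D0"
proof (rule Gc_eqI)
  show "Determinant.det (Am x0) \<noteq> 0" unfolding Am_x0 det_diag4 by simp
  show "D0 \<in> carrier_mat 4 4" by (simp add: D0_def)
  show "D0 * Am x0 = Bm x0"
    unfolding Am_x0 Bm_x0
    apply (rule eq4I)
    prefer 5 apply (unfold all4)
    apply (simp_all add: mult4 sum4 D0_def algebra_simps del: index_mult_mat(1))
    done
qed

lemma t1_D0: "t1 D0 = 2 + 2 * \<i>"
  by (simp add: t1_def tr4_def gam_def sum4 mult4 D0_def MM_def del: index_mult_mat(1))

lemma t2_D0: "t2 D0 = 0"
  by (simp add: t2_def tr4_def gam_def sum4 mult4 D0_def MM_def del: index_mult_mat(1))

lemma x0_EE: "x0 \<in> Eset"
  unfolding Eset_def f1_def f2_def using x0_OO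
  by (simp add: Gc_x0 t1_D0 t2_D0 algebra_simps complex_eq_iff)



lemma md_KK: assumes F: "md UNIV 4 F"
  shows "md {y. Determinant.det (1\<^sub>m 4 + F y) \<noteq> 0} 4 (\<lambda>y. KK (F y))"
proof -
  have P: "md UNIV 4 (\<lambda>y. 1\<^sub>m 4 + F y)" by (intro md_add md_const F) simp
  have M: "md UNIV 4 (\<lambda>y. 1\<^sub>m 4 - F y)" by (intro md_minus md_const F) simp
  have "md {y. Determinant.det (1\<^sub>m 4 + F y) \<noteq> 0} 4 (\<lambda>y. adj_mat (1\<^sub>m 4 + F y) * (1\<^sub>m 4 - F y))"
    by (rule md_mono, intro md_mult md_adj P M)
  moreover have "\<forall>y\<in>{y. Determinant.det (1\<^sub>m 4 + F y) \<noteq> 0}.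
      (\<lambda>y. - \<i> / Determinant.det (1\<^sub>m 4 + F y)) differentiable (at y)"
    using md_det[OF P] by (auto intro!: differentiable_divide)
  ultimately show ?thesis unfolding KK_def by (intro md_smult)
qed

lemma d_phi: assumes K: "md S 4 (\<lambda>y. KK (F y))" and y: "y \<in> S"
  shows "(\<lambda>y. phi (F y)) differentiable (at y)"
proof -
  have e: "\<And>i j. i < 4 \<Longrightarrow> j < 4 \<Longrightarrow> (\<lambda>y. KK (F y) $$ (i,j)) differentiable (at y)"
    using md_entry[OF K y] by blast
  show ?thesis unfolding phi_def
    by (intro differentiable_Pair differentiable_add differentiable_mult differentiable_const d_re e) auto
qed

definition Dset :: "gate list \<Rightarrow> (real^15) set" where
  "Dset s = {y. Determinant.det (1\<^sub>m 4 + Pc s y) \<noteq> 0}"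

definition Img :: "gate list \<Rightarrow> c8 set" where
  "Img s = (\<lambda>y. phi (Pc s y)) ` Dset s"

lemma negl_Img: "negligible (Img s)"
  unfolding Img_def
proof (rule negligible_differentiable_image_lowdim)
  show "DIM(real^15) < DIM(c8)" by simp
  have K: "md (Dset s) 4 (\<lambda>y. KK (Pc s y))" unfolding Dset_def by (rule md_KK[OF md_Pc])
  show "(\<lambda>y. phi (Pc s y)) differentiable_on Dset s"
    unfolding differentiable_on_def using d_phi[OF K] by (auto intro: differentiable_at_withinI)
qed

definition Nset :: "c8 set" where "Nset = \<Union> (Img ` lists (range shape))"

lemma negl_Nset: "negligible Nset"
  unfolding Nset_def
  by (intro negligible_countable_Union countable_image countable_shapes) (auto simp: negl_Img)

lemma exists_good: "\<exists>x. x \<in> Eset \<and> x \<notin> Nset"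
proof (rule ccontr)
  assume "\<not> ?thesis"
  then have "Eset \<subseteq> Nset" by auto
  then have "negligible Eset" using negl_Nset negligible_subset by blast
  moreover have "\<not> negligible Eset" using open_not_negligible[OF open_EE] x0_EE by auto
  ultimately show False by simp
qed

theorem theorem2:
  shows "\<exists>U. unitary4 U \<and>
           (\<forall>c. implements_up_to_phase c U \<longrightarrow>
                 length c \<ge> 17 \<and>
                 length (filter (\<lambda>g. \<not> is_cnot g) c) \<ge> 15 \<and>
                 length (filter is_cnot c) \<ge> 2)"
proof -
  obtain x where xE: "x \<in> Eset" and xN: "x \<notin> Nset" using exists_good by blast
  have dA: "Determinant.det (Am x) \<noteq> 0" and dB: "Determinant.det (Bm x) \<noteq> 0"
    using xE unfolding Eset_def Oset_def by auto
  have h1: "t1 (Gc x) \<noteq> 0" and h2: "t1 (Gc x) * t1 (Gc x) \<noteq> 4 * t2 (Gc x)"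
    using xE unfolding Eset_def f1_def f2_def by auto
  have rot: "length (filter (\<lambda>g. \<not> is_cnot g) c) \<ge> 15" if imp: "implements_up_to_phase c (Gc x)" for c
  proof (rule ccontr)
    assume "\<not> ?thesis"
    then have len: "length (angles c) \<le> 14" by (simp add: length_angles)
    obtain z where z: "cmod z = 1" "circuit_mat c = z \<cdot>\<^sub>m Gc x"
      using imp unfolding implements_up_to_phase_def by blast
    obtain y where y: "Pc (map shape c) y = Gc x" using Pc_surj[OF len z] by blast
    have "y \<in> Dset (map shape c)" unfolding Dset_def using y det_one_plus[OF dA] by simp
    then have "phi (Pc (map shape c) y) \<in> Img (map shape c)" unfolding Img_def by blast
    then have "x \<in> Img (map shape c)" using y phi_Gc[OF dA] by simp
    then have "x \<in> Nset" unfolding Nset_def using map_shape_in[of c] by blast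
    then show False using xN by simp
  qed
  have cn: "length (filter is_cnot c) \<ge> 2" if imp: "implements_up_to_phase c (Gc x)" for c
    by (rule cnot_count[OF Gc_c h1 h2 imp])
  show ?thesis
  proof (intro exI[of _ "Gc x"] conjI allI impI)
    show "unitary4 (Gc x)" by (rule Gc_unitary[OF dA dB])
  next
    fix c assume imp: "implements_up_to_phase c (Gc x)"
    show "length (filter (\<lambda>g. \<not> is_cnot g) c) \<ge> 15" using rot[OF imp] .
    show "length (filter is_cnot c) \<ge> 2" using cn[OF imp] .
    show "length c \<ge> 17" using rot[OF imp] cn[OF imp] sum_length_filter_compl[of is_cnot c] by linarith
  qed
qed

end
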